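(* Consider the two-server network of re-entrant lines with infinite supply described in the context, and suppose it is critical, i.e. $\sum_{j\in C_1(i)}\mu_{i,j}^{-1}=\sum_{j\in C_2(i)}\mu_{i,j}^{-1}$ for every $i=1,\dots,S$, where $C_\ell(i)=\{j\in\{0,\dots,n_i\}:\sigma(i,j)=\ell\}$. Then the network is non-stabilizable: there is no deterministic stationary non-idling policy under which the associated Markov process has a positive recurrent class that is reached with probability 1.
   Context: There are two servers, labeled 1 and 2, and $S\ge1$ job streams. Stream $i$ has $n_i+1$ operations $(i,0),(i,1),\dots,(i,n_i)$ with $n_i\ge1$; each operation $(i,j)$ is performed by a unique server $\sigma(i,j)\in\{1,2\}$ and completes at exponential rate $\mu_{i,j}>0$ (preemption allowed). Operation $(i,0)$ draws from an infinite supply of raw material and is always available; each operation $(i,j)$ with $j\ge1$ has an associated queue, so there are $M=\sum_i n_i$ queues and the state is the vector of queue lengths in $\mathbb{Z}_+^M$. Completion of $(i,0)$ adds a job to the queue of $(i,1)$; completion of $(i,j)$ for $1\le j\le n_i-1$ moves a job from the queue of $(i,j)$ to the queue of $(i,j+1)$; completion of $(i,n_i)$ removes a job from the queue of $(i,n_i)$. An operation $(i,j)$ with $j\ge1$ may be performed only if its queue is non-empty. A non-idling (deterministic stationary) policy assigns, as a function of the state, to each server one of its operations that may be performed. Given a policy, the chosen operations run simultaneously and the state jumps according to whichever completes first, giving a Markov jump process (equivalently its embedded discrete-time chain). The network is non-stabilizable if no non-idling policy makes this process have a positive recurrent class reached with probability 1. *)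

theory Defs
  imports "HOL-Analysis.Analysis"
begin

text \<open>A chain is given by a transition kernel P x y (probability to jump from x to y).
 first_passage P A n x is the probability that, started in x, the chain enters the set A
 for the first time (at times \<ge> 1) exactly at step n.\<close>

fun first_passage :: "('a \<Rightarrow> 'a \<Rightarrow> real) \<Rightarrow> 'a set \<Rightarrow> nat \<Rightarrow> 'a \<Rightarrow> real" where
  "first_passage P A 0 x = 0"
| "first_passage P A (Suc 0) x = infsum (\<lambda>y. P x y) A"
| "first_passage P A (Suc (Suc n)) x =
     infsum (\<lambda>y. P x y * first_passage P A (Suc n) y) (- A)"

definition hit_prob :: "('a \<Rightarrow> 'a \<Rightarrow> real) \<Rightarrow> 'a set \<Rightarrow> 'a \<Rightarrow> real" where
  "hit_prob P A x = (\<Sum>n. first_passage P A n x)"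

definition reach_prob :: "('a \<Rightarrow> 'a \<Rightarrow> real) \<Rightarrow> 'a set \<Rightarrow> 'a \<Rightarrow> real" where
  "reach_prob P A x = (if x \<in> A then 1 else hit_prob P A x)"

definition positive_recurrent :: "('a \<Rightarrow> 'a \<Rightarrow> real) \<Rightarrow> 'a \<Rightarrow> bool" where
  "positive_recurrent P y \<longleftrightarrow>
     hit_prob P {y} y = 1 \<and> summable (\<lambda>n. real n * first_passage P {y} n y)"

definition accessible :: "('a \<Rightarrow> 'a \<Rightarrow> real) \<Rightarrow> 'a \<Rightarrow> 'a \<Rightarrow> bool" where
  "accessible P x y \<longleftrightarrow> (x, y) \<in> {(a, b). P a b > 0}\<^sup>*"

definition positive_recurrent_class ::
  "('a \<Rightarrow> 'a \<Rightarrow> real) \<Rightarrow> 'a set \<Rightarrow> 'a set \<Rightarrow> bool" where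
  "positive_recurrent_class P SS C \<longleftrightarrow>
     (\<exists>x\<in>SS. C = {y \<in> SS. accessible P x y \<and> accessible P y x})
     \<and> (\<forall>y\<in>C. positive_recurrent P y)"

text \<open>Streams are indexed 0..S-1 (i < S); operations of stream i are (i,j), j \<le> n i;
 queues are (i,j) with 1 \<le> j \<le> n i.\<close>

type_synonym nstate = "nat \<times> nat \<Rightarrow> nat"

definition ops :: "nat \<Rightarrow> (nat \<Rightarrow> nat) \<Rightarrow> (nat \<times> nat) set" where
  "ops S n = {(i, j). i < S \<and> j \<le> n i}"

definition queues :: "nat \<Rightarrow> (nat \<Rightarrow> nat) \<Rightarrow> (nat \<times> nat) set" where
  "queues S n = {(i, j). i < S \<and> 1 \<le> j \<and> j \<le> n i}"

definition state_space :: "nat \<Rightarrow> (nat \<Rightarrow> nat) \<Rightarrow> nstate set" where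
  "state_space S n = {x. \<forall>q. q \<notin> queues S n \<longrightarrow> x q = 0}"

definition performable :: "nstate \<Rightarrow> nat \<times> nat \<Rightarrow> bool" where
  "performable x q \<longleftrightarrow> snd q = 0 \<or> x q > 0"

definition step :: "(nat \<Rightarrow> nat) \<Rightarrow> nstate \<Rightarrow> nat \<times> nat \<Rightarrow> nstate" where
  "step n x q = (case q of (i, j) \<Rightarrow>
     if j = 0 then x((i, 1) := x (i, 1) + 1)
     else if j < n i then x((i, j) := x (i, j) - 1, (i, Suc j) := x (i, Suc j) + 1)
     else x((i, j) := x (i, j) - 1))"

text \<open>A deterministic stationary policy: for each state and server (1 or 2) either an
 operation (Some q) or idling (None).\<close>
type_synonym policy = "nstate \<Rightarrow> nat \<Rightarrow> (nat \<times> nat) option"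

definition non_idling ::
  "nat \<Rightarrow> (nat \<Rightarrow> nat) \<Rightarrow> (nat \<Rightarrow> nat \<Rightarrow> nat) \<Rightarrow> policy \<Rightarrow> bool" where
  "non_idling S n \<sigma> \<pi> \<longleftrightarrow>
     (\<forall>x \<in> state_space S n. \<forall>l \<in> {1, 2::nat}.
        (case \<pi> x l of
           None \<Rightarrow> \<not> (\<exists>q \<in> ops S n. \<sigma> (fst q) (snd q) = l \<and> performable x q)
         | Some q \<Rightarrow> q \<in> ops S n \<and> \<sigma> (fst q) (snd q) = l \<and> performable x q))"

definition server_rate :: "(nat \<Rightarrow> nat \<Rightarrow> real) \<Rightarrow> policy \<Rightarrow> nstate \<Rightarrow> nat \<Rightarrow> real" where
  "server_rate \<mu> \<pi> x l = (case \<pi> x l of None \<Rightarrow> 0 | Some q \<Rightarrow> \<mu> (fst q) (snd q))"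

text \<open>Transition kernel of the embedded jump chain of the Markov jump process.\<close>
definition embedded_kernel ::
  "(nat \<Rightarrow> nat) \<Rightarrow> (nat \<Rightarrow> nat \<Rightarrow> real) \<Rightarrow> policy \<Rightarrow> nstate \<Rightarrow> nstate \<Rightarrow> real" where
  "embedded_kernel n \<mu> \<pi> x y =
     (\<Sum>l \<in> {1, 2::nat}. (case \<pi> x l of None \<Rightarrow> 0
        | Some q \<Rightarrow> if step n x q = y then \<mu> (fst q) (snd q) else 0))
     / (\<Sum>l \<in> {1, 2::nat}. server_rate \<mu> \<pi> x l)"

definition stabilizable ::
  "nat \<Rightarrow> (nat \<Rightarrow> nat) \<Rightarrow> (nat \<Rightarrow> nat \<Rightarrow> nat) \<Rightarrow> (nat \<Rightarrow> nat \<Rightarrow> real) \<Rightarrow> bool" where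
  "stabilizable S n \<sigma> \<mu> \<longleftrightarrow>
     (\<exists>\<pi>. non_idling S n \<sigma> \<pi> \<and>
        (\<exists>C. positive_recurrent_class (embedded_kernel n \<mu> \<pi>) (state_space S n) C \<and>
             (\<forall>x \<in> state_space S n. reach_prob (embedded_kernel n \<mu> \<pi>) C x = 1)))"

definition critical :: "nat \<Rightarrow> (nat \<Rightarrow> nat) \<Rightarrow> (nat \<Rightarrow> nat \<Rightarrow> nat) \<Rightarrow> (nat \<Rightarrow> nat \<Rightarrow> real) \<Rightarrow> bool" where
  "critical S n \<sigma> \<mu> \<longleftrightarrow>
     (\<forall>i < S. (\<Sum>j \<in> {j. j \<le> n i \<and> \<sigma> i j = 1}. 1 / \<mu> i j)
            = (\<Sum>j \<in> {j. j \<le> n i \<and> \<sigma> i j = 2}. 1 / \<mu> i j))"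

end

theory Submission
  imports Defs
begin


definition ff :: "real \<Rightarrow> real" where "ff t = t - sqrt (1 + t\<^sup>2)"
definition ffd :: "real \<Rightarrow> real" where "ffd t = 1 - t / sqrt (1 + t\<^sup>2)"

lemma sq_facts: "sqrt (1 + t\<^sup>2) > 0" "(sqrt (1 + t\<^sup>2))\<^sup>2 = 1 + t\<^sup>2" "\<bar>t\<bar> < sqrt (1 + t\<^sup>2)"
proof -
  show "sqrt (1 + t\<^sup>2) > 0" by (simp add: add_pos_nonneg)
  show "(sqrt (1 + t\<^sup>2))\<^sup>2 = 1 + t\<^sup>2" by (rule real_sqrt_pow2) simp
  show "\<bar>t\<bar> < sqrt (1 + t\<^sup>2)"
    by (rule real_less_rsqrt) simp
qed

lemma ffd_pos: "ffd t > 0"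
proof -
  have b: "sqrt (1 + t\<^sup>2) > 0" "\<bar>t\<bar> < sqrt (1 + t\<^sup>2)" using sq_facts by auto
  hence "t / sqrt (1 + t\<^sup>2) < 1" by (simp add: divide_less_eq)
  thus ?thesis unfolding ffd_def by simp
qed

lemma ff_tangent:
  assumes "s \<noteq> t" shows "ff s < ff t + ffd t * (s - t)"
proof -
  define a where "a = sqrt (1 + s\<^sup>2)"
  define b where "b = sqrt (1 + t\<^sup>2)"
  have a: "a > 0" "a\<^sup>2 = 1 + s\<^sup>2" unfolding a_def by (rule sq_facts)+
  have b: "b > 0" "b\<^sup>2 = 1 + t\<^sup>2" unfolding b_def by (rule sq_facts)+
  have "(a * b)\<^sup>2 = (1 + s\<^sup>2) * (1 + t\<^sup>2)" using a b by (simp add: power_mult_distrib)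
  also have "\<dots> = (1 + t * s)\<^sup>2 + (s - t)\<^sup>2" by (simp add: power2_eq_square algebra_simps)
  finally have e: "(a * b)\<^sup>2 = (1 + t * s)\<^sup>2 + (s - t)\<^sup>2" .
  have "(s - t)\<^sup>2 > 0" using assms by (simp del: a b)
  hence "(1 + t * s)\<^sup>2 < (a * b)\<^sup>2" using e by linarith
  hence key: "1 + t * s < a * b" by (rule power2_less_imp_less) (use a(1) b(1) in simp)
  have d: "ff t = t - b" "ff s = s - a" "ffd t = 1 - t / b" unfolding ff_def ffd_def a_def b_def by auto
  have "t - b + (1 - t / b) * (s - t) - (s - a) = (a * b - b\<^sup>2 + t\<^sup>2 - t * s) / b"
    using b by (simp add: field_simps power2_eq_square)
  also have "\<dots> = (a * b - 1 - t * s) / b" using b by simp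
  also have "\<dots> > 0" using key b by simp
  finally show ?thesis unfolding d by linarith
qed

lemma ff_lip: "\<bar>ff s - ff t\<bar> \<le> 2 * \<bar>s - t\<bar>"
proof -
  define a where "a = sqrt (1 + s\<^sup>2)"
  define b where "b = sqrt (1 + t\<^sup>2)"
  have a: "a > 0" "a\<^sup>2 = 1 + s\<^sup>2" "\<bar>s\<bar> < a" unfolding a_def by (rule sq_facts)+
  have b: "b > 0" "b\<^sup>2 = 1 + t\<^sup>2" "\<bar>t\<bar> < b" unfolding b_def by (rule sq_facts)+
  have e: "(a - b) * (a + b) = (s - t) * (s + t)" using a b by (simp add: algebra_simps power2_eq_square)
  have "\<bar>a - b\<bar> * (a + b) = \<bar>s - t\<bar> * \<bar>s + t\<bar>" using e a b
    by (metis abs_mult abs_of_pos add_pos_pos)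
  also have "\<dots> \<le> \<bar>s - t\<bar> * (a + b)" using a b by (intro mult_left_mono) auto
  finally have "\<bar>a - b\<bar> \<le> \<bar>s - t\<bar>" using a b by simp
  moreover have "ff s - ff t = (s - t) - (a - b)" unfolding ff_def a_def b_def by simp
  moreover have "\<bar>(s - t) - (a - b)\<bar> \<le> \<bar>s - t\<bar> + \<bar>a - b\<bar>" by (rule abs_triangle_ineq4)
  ultimately have "\<bar>ff s - ff t\<bar> \<le> \<bar>s - t\<bar> + \<bar>a - b\<bar>" by simp
  moreover have "\<bar>s - t\<bar> + \<bar>a - b\<bar> \<le> 2 * \<bar>s - t\<bar>" using \<open>\<bar>a - b\<bar> \<le> \<bar>s - t\<bar>\<close> by simp
  ultimately show ?thesis by (rule order_trans)
qed


lemma infsum_kernel: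
  fixes P :: "'a \<Rightarrow> 'a \<Rightarrow> real"
  assumes P: "\<And>z. P x z = (if s1 = z then p1 else 0) + (if s2 = z then p2 else 0)"
  shows "infsum (\<lambda>z. P x z * h z) A
     = (if s1 \<in> A then p1 * h s1 else 0) + (if s2 \<in> A then p2 * h s2 else 0)"
proof -
  let ?F = "A \<inter> {s1, s2}"
  have "infsum (\<lambda>z. P x z * h z) A = infsum (\<lambda>z. P x z * h z) ?F"
    by (rule infsum_cong_neutral) (auto simp: P)
  also have "\<dots> = sum (\<lambda>z. P x z * h z) ?F" by simp
  also have "\<dots> = (if s1 \<in> A then p1 * h s1 else 0) + (if s2 \<in> A then p2 * h s2 else 0)"
    by (cases "s1 = s2") (auto simp: P distrib_right sum.distrib insert_Diff_if)
  finally show ?thesis .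
qed



primrec Qs :: "(nat \<Rightarrow> 'a \<Rightarrow> real) \<Rightarrow> (nat \<Rightarrow> 'a \<Rightarrow> 'a) \<Rightarrow> 'a \<Rightarrow> nat \<Rightarrow> 'a \<Rightarrow> real" where
  "Qs p s y 0 x = 1"
| "Qs p s y (Suc N) x = (if s 1 x = y then 0 else p 1 x * Qs p s y N (s 1 x))
                       + (if s 2 x = y then 0 else p 2 x * Qs p s y N (s 2 x))"

primrec Gs :: "(nat \<Rightarrow> 'a \<Rightarrow> real) \<Rightarrow> (nat \<Rightarrow> 'a \<Rightarrow> 'a) \<Rightarrow> 'a \<Rightarrow> ('a \<Rightarrow> real) \<Rightarrow> nat \<Rightarrow> 'a \<Rightarrow> real" where
  "Gs p s y V 0 x = 0"
| "Gs p s y V (Suc N) x = (p 1 x * V (s 1 x) + p 2 x * V (s 2 x) - V x)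
      + (if s 1 x = y then 0 else p 1 x * Gs p s y V N (s 1 x))
      + (if s 2 x = y then 0 else p 2 x * Gs p s y V N (s 2 x))"

primrec Ks :: "(nat \<Rightarrow> 'a \<Rightarrow> real) \<Rightarrow> (nat \<Rightarrow> 'a \<Rightarrow> 'a) \<Rightarrow> 'a \<Rightarrow> ('a \<Rightarrow> real) \<Rightarrow> nat \<Rightarrow> 'a \<Rightarrow> real" where
  "Ks p s y V 0 x = V x - V y"
| "Ks p s y V (Suc N) x = (if s 1 x = y then 0 else p 1 x * Ks p s y V N (s 1 x))
      + (if s 2 x = y then 0 else p 2 x * Ks p s y V N (s 2 x))"

lemma no_pos_rec:
  fixes P :: "'a \<Rightarrow> 'a \<Rightarrow> real" and p :: "nat \<Rightarrow> 'a \<Rightarrow> real" and s :: "nat \<Rightarrow> 'a \<Rightarrow> 'a"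
    and V :: "'a \<Rightarrow> real"
  assumes P: "\<And>x z. P x z = (if s 1 x = z then p 1 x else 0) + (if s 2 x = z then p 2 x else 0)"
    and pnn: "\<And>x. x \<in> SS \<Longrightarrow> p 1 x \<ge> 0 \<and> p 2 x \<ge> 0"
    and psum: "\<And>x. x \<in> SS \<Longrightarrow> p 1 x + p 2 x = 1"
    and sSS: "\<And>x. x \<in> SS \<Longrightarrow> s 1 x \<in> SS \<and> s 2 x \<in> SS"
    and Lip: "\<And>x. x \<in> SS \<Longrightarrow> \<bar>V (s 1 x) - V x\<bar> \<le> L \<and> \<bar>V (s 2 x) - V x\<bar> \<le> L"
    and drift: "\<And>x. x \<in> SS \<Longrightarrow> p 1 x * V (s 1 x) + p 2 x * V (s 2 x) < V x"
    and y: "y \<in> SS"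
  shows "\<not> positive_recurrent P y"
proof
  assume pr: "positive_recurrent P y"
  define fp where "fp k x = first_passage P {y} k x" for k x
  have fp1: "fp (Suc 0) x = (if s 1 x = y then p 1 x else 0) + (if s 2 x = y then p 2 x else 0)" for x
    unfolding fp_def using infsum_kernel[of P x "s 1 x" "p 1 x" "s 2 x" "p 2 x" "\<lambda>_. 1" "{y}"] P by simp
  have fp2: "fp (Suc (Suc k)) x = (if s 1 x = y then 0 else p 1 x * fp (Suc k) (s 1 x))
       + (if s 2 x = y then 0 else p 2 x * fp (Suc k) (s 2 x))" for k x
    unfolding fp_def using infsum_kernel[of P x "s 1 x" "p 1 x" "s 2 x" "p 2 x" "first_passage P {y} (Suc k)" "-{y}"] P
    by auto
  have fp0: "fp 0 x = 0" for x unfolding fp_def by simp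
  have fpnn: "x \<in> SS \<Longrightarrow> fp (Suc k) x \<ge> 0" for k x
  proof (induction k arbitrary: x)
    case 0 thus ?case using pnn[OF 0] by (simp add: fp1)
  next
    case (Suc k) thus ?case using pnn[OF Suc.prems] sSS[OF Suc.prems]
      by (simp add: fp2 Suc.IH)
  qed
  have fpnn': "fp k y \<ge> 0" for k using fpnn[OF y] fp0 by (cases k) auto
  have Qnn: "x \<in> SS \<Longrightarrow> Qs p s y N x \<ge> 0" for N x
  proof (induction N arbitrary: x)
    case 0 thus ?case by simp
  next
    case (Suc N) thus ?case using pnn[OF Suc.prems] sSS[OF Suc.prems] by (simp add: Suc.IH)
  qed
  have Qfp: "x \<in> SS \<Longrightarrow> Qs p s y N x = 1 - (\<Sum>k<N. fp (Suc k) x)" for N x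
  proof (induction N arbitrary: x)
    case 0 thus ?case by simp
  next
    case (Suc N)
    have e1: "(\<Sum>k<N. fp (Suc (Suc k)) x) = (if s 1 x = y then 0 else p 1 x * (\<Sum>k<N. fp (Suc k) (s 1 x)))
       + (if s 2 x = y then 0 else p 2 x * (\<Sum>k<N. fp (Suc k) (s 2 x)))"
      by (cases "s 1 x = y"; cases "s 2 x = y") (simp_all add: fp2 sum.distrib sum_distrib_left)
    have "(\<Sum>k<Suc N. fp (Suc k) x) = fp (Suc 0) x + (\<Sum>k<N. fp (Suc (Suc k)) x)"
      by (rule sum.lessThan_Suc_shift)
    moreover have "Qs p s y N (s 1 x) = 1 - (\<Sum>k<N. fp (Suc k) (s 1 x))"
      using Suc.IH sSS[OF Suc.prems] by blast
    moreover have "Qs p s y N (s 2 x) = 1 - (\<Sum>k<N. fp (Suc k) (s 2 x))"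
      using Suc.IH sSS[OF Suc.prems] by blast
    ultimately show ?case using psum[OF Suc.prems] e1
      by (cases "s 1 x = y"; cases "s 2 x = y") (simp_all add: fp1 right_diff_distrib)
  qed
  define g where "g x = p 1 x * V (s 1 x) + p 2 x * V (s 2 x) - V x" for x
  have Gnp: "x \<in> SS \<Longrightarrow> Gs p s y V N x \<le> 0" for N x
  proof (induction N arbitrary: x)
    case 0 thus ?case by simp
  next
    case (Suc N)
    have "(if s 1 x = y then 0 else p 1 x * Gs p s y V N (s 1 x)) \<le> 0"
      using pnn[OF Suc.prems] sSS[OF Suc.prems] Suc.IH by (simp add: mult_nonneg_nonpos)
    moreover have "(if s 2 x = y then 0 else p 2 x * Gs p s y V N (s 2 x)) \<le> 0"
      using pnn[OF Suc.prems] sSS[OF Suc.prems] Suc.IH by (simp add: mult_nonneg_nonpos)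
    ultimately show ?case using drift[OF Suc.prems] by simp
  qed
  have Gy: "Gs p s y V (Suc N) y \<le> g y" for N
  proof -
    have "(if s 1 y = y then 0 else p 1 y * Gs p s y V N (s 1 y)) \<le> 0"
      using pnn[OF y] sSS[OF y] Gnp by (simp add: mult_nonneg_nonpos)
    moreover have "(if s 2 y = y then 0 else p 2 y * Gs p s y V N (s 2 y)) \<le> 0"
      using pnn[OF y] sSS[OF y] Gnp by (simp add: mult_nonneg_nonpos)
    ultimately show ?thesis by (simp add: g_def)
  qed
  have KG: "x \<in> SS \<Longrightarrow> Ks p s y V N x = Gs p s y V N x + V x - V y" for N x
  proof (induction N arbitrary: x)
    case 0 thus ?case by simp
  next
    case (Suc N)
    have k1: "Ks p s y V N (s 1 x) = Gs p s y V N (s 1 x) + V (s 1 x) - V y"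
      using Suc.IH sSS[OF Suc.prems] by blast
    have k2: "Ks p s y V N (s 2 x) = Gs p s y V N (s 2 x) + V (s 2 x) - V y"
      using Suc.IH sSS[OF Suc.prems] by blast
    have p2: "p 2 x = 1 - p 1 x" using psum[OF Suc.prems] by simp
    show ?case unfolding Ks.simps Gs.simps k1 k2 p2
      by (cases "s 1 x = y"; cases "s 2 x = y") (simp_all add: algebra_simps)
  qed
  have Lnn: "L \<ge> 0" using Lip[OF y] by linarith
  have Kb: "x \<in> SS \<Longrightarrow> \<bar>Ks p s y V N x\<bar> \<le> (\<bar>V x - V y\<bar> + L * real N) * Qs p s y N x" for N x
  proof (induction N arbitrary: x)
    case 0 thus ?case by simp
  next
    case (Suc N)
    have one: "\<bar>if s l x = y then 0 else p l x * Ks p s y V N (s l x)\<bar>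
        \<le> (if s l x = y then 0 else p l x * ((\<bar>V x - V y\<bar> + L * real (Suc N)) * Qs p s y N (s l x)))"
      if l: "l = 1 \<or> l = 2" for l
    proof (cases "s l x = y")
      case True thus ?thesis by simp
    next
      case False
      have sl: "s l x \<in> SS" and pl: "p l x \<ge> 0" and Ll: "\<bar>V (s l x) - V x\<bar> \<le> L"
        using l sSS[OF Suc.prems] pnn[OF Suc.prems] Lip[OF Suc.prems] by auto
      have "\<bar>Ks p s y V N (s l x)\<bar> \<le> (\<bar>V (s l x) - V y\<bar> + L * real N) * Qs p s y N (s l x)"
        using Suc.IH[OF sl] .
      also have "\<dots> \<le> (\<bar>V x - V y\<bar> + L * real (Suc N)) * Qs p s y N (s l x)"
      proof (rule mult_right_mono)
        show "0 \<le> Qs p s y N (s l x)" using Qnn[OF sl] .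
        have "\<bar>V (s l x) - V y\<bar> \<le> \<bar>V x - V y\<bar> + L" using Ll by linarith
        thus "\<bar>V (s l x) - V y\<bar> + L * real N \<le> \<bar>V x - V y\<bar> + L * real (Suc N)"
          by (simp add: algebra_simps)
      qed
      finally have "p l x * \<bar>Ks p s y V N (s l x)\<bar> \<le> p l x * ((\<bar>V x - V y\<bar> + L * real (Suc N)) * Qs p s y N (s l x))"
        using pl by (rule mult_left_mono)
      thus ?thesis using False pl by (simp add: abs_mult)
    qed
    have "\<bar>Ks p s y V (Suc N) x\<bar> \<le> \<bar>if s 1 x = y then 0 else p 1 x * Ks p s y V N (s 1 x)\<bar>
       + \<bar>if s 2 x = y then 0 else p 2 x * Ks p s y V N (s 2 x)\<bar>"
      by (simp only: Ks.simps abs_triangle_ineq)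
    also have "\<dots> \<le> (\<bar>V x - V y\<bar> + L * real (Suc N)) * Qs p s y (Suc N) x"
      using one[of 1] one[of 2]
      by (cases "s 1 x = y"; cases "s 2 x = y") (simp_all add: algebra_simps)
    finally show ?case .
  qed
  define a where "a k = fp k y" for k
  have a0: "a 0 = 0" unfolding a_def fp0 ..
  have ann: "a k \<ge> 0" for k unfolding a_def by (rule fpnn')
  have hit: "(\<Sum>k. a k) = 1" and sumka: "summable (\<lambda>k. real k * a k)"
    using pr unfolding positive_recurrent_def hit_prob_def a_def fp_def by auto
  have suma: "summable a"
  proof (rule summable_comparison_test[OF _ sumka])
    show "\<exists>N. \<forall>n\<ge>N. norm (a n) \<le> real n * a n"
    proof (intro exI[of _ 0] allI impI)
      fix n :: nat
      show "norm (a n) \<le> real n * a n"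
      proof (cases n)
        case 0 thus ?thesis using a0 by simp
      next
        case (Suc m)
        have "1 * a n \<le> real n * a n" using ann[of n] Suc by (intro mult_right_mono) auto
        thus ?thesis using ann[of n] by simp
      qed
    qed
  qed
  define T where "T = (\<Sum>k. real k * a k)"
  have bound: "real N * Qs p s y N y \<le> T - (\<Sum>k<Suc N. real k * a k)" for N
  proof -
    have "Qs p s y N y = 1 - (\<Sum>k<N. a (Suc k))" using Qfp[OF y] by (simp add: a_def)
    also have "(\<Sum>k<N. a (Suc k)) = (\<Sum>k<Suc N. a k)" by (subst sum.lessThan_Suc_shift) (simp add: a0)
    also have "1 - (\<Sum>k<Suc N. a k) = (\<Sum>j. a (j + Suc N))"
      using suminf_split_initial_segment[OF suma, of "Suc N"] hit by simp
    finally have Q: "Qs p s y N y = (\<Sum>j. a (j + Suc N))" .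
    have s1: "summable (\<lambda>j. a (j + Suc N))" using suma by (rule summable_ignore_initial_segment)
    have s2: "summable (\<lambda>j. real (j + Suc N) * a (j + Suc N))"
      using summable_ignore_initial_segment[OF sumka, of "Suc N"] .
    have "real N * Qs p s y N y = (\<Sum>j. real N * a (j + Suc N))" unfolding Q
      using suminf_mult[OF s1] by simp
    also have "\<dots> \<le> (\<Sum>j. real (j + Suc N) * a (j + Suc N))"
      by (rule suminf_le) (use ann s1 s2 in \<open>auto intro!: mult_right_mono summable_mult\<close>)
    also have "\<dots> = T - (\<Sum>k<Suc N. real k * a k)"
      using suminf_split_initial_segment[OF sumka, of "Suc N"] unfolding T_def by simp
    finally show ?thesis .
  qed
  have key: "- g y \<le> L * (T - (\<Sum>k<Suc N. real k * a k))" if N1: "N \<ge> 1" for N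
  proof -
    obtain M where N: "N = Suc M" using N1 by (cases N) auto
    have "- g y \<le> - Gs p s y V N y" using Gy[of M] N by simp
    also have "\<dots> = - Ks p s y V N y" using KG[OF y] by simp
    also have "\<dots> \<le> \<bar>Ks p s y V N y\<bar>" by simp
    also have "\<dots> \<le> L * (real N * Qs p s y N y)" using Kb[OF y, of N] by (simp add: algebra_simps)
    also have "\<dots> \<le> L * (T - (\<Sum>k<Suc N. real k * a k))"
      using bound[of N] Lnn by (rule mult_left_mono)
    finally show ?thesis .
  qed
  have lim: "(\<lambda>N. L * (T - (\<Sum>k<Suc N. real k * a k))) \<longlonglongrightarrow> L * (T - T)"
  proof -
    have "(\<lambda>N. \<Sum>k<N. real k * a k) \<longlonglongrightarrow> T" unfolding T_def using sumka by (rule summable_LIMSEQ)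
    hence "(\<lambda>N. \<Sum>k<Suc N. real k * a k) \<longlonglongrightarrow> T" by (rule LIMSEQ_Suc)
    thus ?thesis by (intro tendsto_intros)
  qed
  have "- g y \<le> L * (T - T)"
    by (rule LIMSEQ_le_const[OF lim]) (use key in auto)
  moreover have "g y < 0" using drift[OF y] by (simp add: g_def)
  ultimately show False by simp
qed



lemma finite_queues: "finite (queues S n)"
  by (rule finite_subset[of _ "SIGMA i:{..<S}. {..n i}"]) (auto simp: queues_def)

lemma finite_ops: "finite (ops S n)"
  by (rule finite_subset[of _ "SIGMA i:{..<S}. {..n i}"]) (auto simp: ops_def)

lemma sum_upd:
  fixes x :: nstate and w :: "nat \<times> nat \<Rightarrow> real"
  assumes "finite Q" "q0 \<in> Q"
  shows "(\<Sum>q\<in>Q. real ((x(q0 := v)) q) * w q) = (\<Sum>q\<in>Q. real (x q) * w q) + (real v - real (x q0)) * w q0"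
proof -
  have "(\<Sum>q\<in>Q. real ((x(q0 := v)) q) * w q) = real v * w q0 + (\<Sum>q\<in>Q - {q0}. real ((x(q0 := v)) q) * w q)"
    using assms by (simp add: sum.remove)
  also have "(\<Sum>q\<in>Q - {q0}. real ((x(q0 := v)) q) * w q) = (\<Sum>q\<in>Q - {q0}. real (x q) * w q)"
    by (rule sum.cong) auto
  also have "(\<Sum>q\<in>Q. real (x q) * w q) = real (x q0) * w q0 + (\<Sum>q\<in>Q - {q0}. real (x q) * w q)"
    using assms by (simp add: sum.remove)
  ultimately show ?thesis by (simp add: algebra_simps)
qed

lemma D_step:
  fixes x :: nstate and aw d :: "nat \<times> nat \<Rightarrow> real"
  assumes aw: "\<And>i j. aw (i, j) = (\<Sum>k<j. d (i, k))"
    and i: "i < S" and j: "j \<le> n i" and ni: "1 \<le> n i" and perf: "performable x (i, j)"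
    and crit: "(\<Sum>k<Suc (n i). d (i, k)) = 0"
  shows "(\<Sum>q\<in>queues S n. real (step n x (i, j) q) * aw q) = (\<Sum>q\<in>queues S n. real (x q) * aw q) + d (i, j)"
proof -
  have fq: "finite (queues S n)" by (rule finite_queues)
  consider "j = 0" | "0 < j" "j < n i" | "0 < j" "j = n i" using j ni by linarith
  then show ?thesis
  proof cases
    case 1
    have "(i, 1) \<in> queues S n" using i ni by (simp add: queues_def)
    thus ?thesis using 1 sum_upd[OF fq, of "(i,1)" x "x (i,1) + 1" aw] by (simp add: step_def aw)
  next
    case 2
    have xp: "x (i, j) > 0" using perf 2 by (simp add: performable_def)
    have m1: "(i, j) \<in> queues S n" "(i, Suc j) \<in> queues S n" using i 2 by (auto simp: queues_def)
    let ?x1 = "x((i, j) := x (i, j) - 1)"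
    have st: "step n x (i, j) = ?x1((i, Suc j) := ?x1 (i, Suc j) + 1)" using 2 by (simp add: step_def)
    have "(\<Sum>q\<in>queues S n. real (step n x (i, j) q) * aw q)
        = (\<Sum>q\<in>queues S n. real (?x1 q) * aw q) + aw (i, Suc j)"
      unfolding st using sum_upd[OF fq m1(2), of ?x1 "?x1 (i, Suc j) + 1" aw] by simp
    also have "(\<Sum>q\<in>queues S n. real (?x1 q) * aw q) = (\<Sum>q\<in>queues S n. real (x q) * aw q) - aw (i, j)"
      using sum_upd[OF fq m1(1), of x "x (i, j) - 1" aw] xp by (simp add: of_nat_diff)
    finally show ?thesis by (simp add: aw)
  next
    case 3
    have xp: "x (i, j) > 0" using perf 3 by (simp add: performable_def)
    have m1: "(i, j) \<in> queues S n" using i 3 by (auto simp: queues_def)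
    have st: "step n x (i, j) = x((i, j) := x (i, j) - 1)" using 3 by (simp add: step_def)
    have "(\<Sum>q\<in>queues S n. real (step n x (i, j) q) * aw q) = (\<Sum>q\<in>queues S n. real (x q) * aw q) - aw (i, j)"
      unfolding st using sum_upd[OF fq m1, of x "x (i, j) - 1" aw] xp by (simp add: of_nat_diff)
    moreover have "aw (i, j) = - d (i, j)" using crit 3 by (simp add: aw)
    ultimately show ?thesis by simp
  qed
qed

lemma step_SS:
  assumes x: "x \<in> state_space S n" and q: "(i, j) \<in> ops S n" and ni: "1 \<le> n i" and perf: "performable x (i, j)"
  shows "step n x (i, j) \<in> state_space S n"
  using assms unfolding state_space_def queues_def ops_def step_def performable_def
  by (auto simp: not_le)



lemma crit_sum:
  fixes \<sigma> :: "nat \<Rightarrow> nat \<Rightarrow> nat" and \<mu> :: "nat \<Rightarrow> nat \<Rightarrow> real"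
  assumes cr: "critical S n \<sigma> \<mu>" and i: "i < S" and sig: "\<forall>j \<le> n i. \<sigma> i j \<in> {1, 2}"
    and ls: "ls \<in> {1, 2::nat}"
  shows "(\<Sum>k<Suc (n i). (if \<sigma> i k = ls then -1 else 1) / \<mu> i k) = 0"
proof -
  let ?d = "\<lambda>k. (if \<sigma> i k = ls then -1 else 1) / \<mu> i k"
  define A1 where "A1 = {j. j \<le> n i \<and> \<sigma> i j = 1}"
  define A2 where "A2 = {j. j \<le> n i \<and> \<sigma> i j = 2}"
  have un: "{..<Suc (n i)} = A1 \<union> A2" using sig by (auto simp: A1_def A2_def less_Suc_eq_le)
  have fin: "finite A1" "finite A2" by (auto simp: A1_def A2_def)
  have dis: "A1 \<inter> A2 = {}" by (auto simp: A1_def A2_def)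
  have eq: "(\<Sum>j\<in>A1. 1 / \<mu> i j) = (\<Sum>j\<in>A2. 1 / \<mu> i j)"
    using cr i unfolding critical_def A1_def A2_def by blast
  have "(\<Sum>k<Suc (n i). ?d k) = (\<Sum>k\<in>A1. ?d k) + (\<Sum>k\<in>A2. ?d k)"
    unfolding un by (rule sum.union_disjoint[OF fin dis])
  also have "(\<Sum>k\<in>A1. ?d k) = (if ls = 1 then -1 else 1) * (\<Sum>j\<in>A1. 1 / \<mu> i j)"
    unfolding sum_distrib_left by (rule sum.cong) (auto simp: A1_def)
  also have "(\<Sum>k\<in>A2. ?d k) = (if ls = 2 then -1 else 1) * (\<Sum>j\<in>A2. 1 / \<mu> i j)"
    unfolding sum_distrib_left by (rule sum.cong) (auto simp: A2_def)
  finally show ?thesis using eq ls by auto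
qed

theorem theorem4:
  fixes S :: nat and n :: "nat \<Rightarrow> nat" and \<sigma> :: "nat \<Rightarrow> nat \<Rightarrow> nat"
    and \<mu> :: "nat \<Rightarrow> nat \<Rightarrow> real"
  assumes "S \<ge> 1"
    and "\<forall>i < S. n i \<ge> 1"
    and "\<forall>i < S. \<forall>j \<le> n i. \<sigma> i j \<in> {1, 2}"
    and "\<forall>i < S. \<forall>j \<le> n i. \<mu> i j > 0"
    and "critical S n \<sigma> \<mu>"
  shows "\<not> stabilizable S n \<sigma> \<mu>"
proof
  assume "stabilizable S n \<sigma> \<mu>"
  then obtain \<pi> C where NI: "non_idling S n \<sigma> \<pi>"
    and prc: "positive_recurrent_class (embedded_kernel n \<mu> \<pi>) (state_space S n) C"
    unfolding stabilizable_def by blast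
  define P where "P = embedded_kernel n \<mu> \<pi>"
  define SS where "SS = state_space S n"
  obtain x0 where x0: "x0 \<in> SS" and C: "C = {y \<in> SS. accessible P x0 y \<and> accessible P y x0}"
    and allpr: "\<forall>y\<in>C. positive_recurrent P y"
    using prc unfolding positive_recurrent_class_def P_def SS_def by blast
  have "x0 \<in> C" using x0 unfolding C accessible_def by simp
  hence pr: "positive_recurrent P x0" using allpr by blast
  define ls where "ls = \<sigma> 0 0"
  have ls: "ls \<in> {1, 2}" using assms(1,3) unfolding ls_def by auto
  define d where "d q = (if \<sigma> (fst q) (snd q) = ls then -1 else 1) / \<mu> (fst q) (snd q)" for q :: "nat \<times> nat"
  define aw where "aw q = (\<Sum>k<snd q. d (fst q, k))" for q :: "nat \<times> nat"
  define D where "D x = (\<Sum>q\<in>queues S n. real (x q) * aw q)" for x :: nstate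
  define V where "V x = ff (D x)" for x
  define R where "R x = server_rate \<mu> \<pi> x 1 + server_rate \<mu> \<pi> x 2" for x
  define p where "p l x = server_rate \<mu> \<pi> x l / R x" for l x
  define s where "s l x = (case \<pi> x l of None \<Rightarrow> x | Some q \<Rightarrow> step n x q)" for l x
  define L where "L = 2 * (\<Sum>q\<in>ops S n. 1 / \<mu> (fst q) (snd q))"
  have NIs: "q \<in> ops S n \<and> \<sigma> (fst q) (snd q) = l \<and> performable x q"
    if "x \<in> SS" "l \<in> {1,2}" "\<pi> x l = Some q" for x l q
    using NI that unfolding non_idling_def SS_def by force
  have NIn: "\<not> (\<exists>q \<in> ops S n. \<sigma> (fst q) (snd q) = l \<and> performable x q)"
    if "x \<in> SS" "l \<in> {1,2}" "\<pi> x l = None" for x l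
    using NI that unfolding non_idling_def SS_def by force
  have mupos: "\<mu> (fst q) (snd q) > 0" if "q \<in> ops S n" for q
    using assms(4) that by (auto simp: ops_def)
  have Dstep: "D (step n x q) = D x + d q" if "q \<in> ops S n" "performable x q" for x q
  proof -
    obtain i j where q: "q = (i, j)" by (cases q)
    have i: "i < S" "j \<le> n i" using that q by (auto simp: ops_def)
    have cr: "(\<Sum>k<Suc (n i). d (i, k)) = 0"
      using crit_sum[OF assms(5) i(1) _ ls] assms(3) i unfolding d_def by auto
    show ?thesis unfolding D_def q
      by (rule D_step[of aw "\<lambda>q. d q"]) (use i cr assms(2) that q in \<open>auto simp: aw_def\<close>)
  qed
  have sstep: "step n x q \<in> SS" if "x \<in> SS" "q \<in> ops S n" "performable x q" for x q
    using step_SS[of x S n "fst q" "snd q"] that assms(2) unfolding SS_def by (auto simp: ops_def)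
  have Sls: "\<exists>q. \<pi> x ls = Some q" if "x \<in> SS" for x
  proof (cases "\<pi> x ls")
    case None
    have "(0,0) \<in> ops S n" "performable x (0,0)" using assms(1) by (auto simp: ops_def performable_def)
    thus ?thesis using NIn[OF that ls None] by (auto simp: ls_def)
  qed auto
  have Rpos: "R x > 0" if xS0: "x \<in> SS" for x
  proof -
    obtain q where q: "\<pi> x ls = Some q" using Sls[OF xS0] by blast
    have "q \<in> ops S n" using NIs[OF xS0 ls q] by blast
    hence r1: "server_rate \<mu> \<pi> x ls > 0" using q mupos by (simp add: server_rate_def)
    have r2: "server_rate \<mu> \<pi> x l \<ge> 0" if "l \<in> {1,2}" for l
      using NIs[OF \<open>x \<in> SS\<close> that] mupos by (cases "\<pi> x l") (auto simp: server_rate_def less_imp_le)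
    show ?thesis using ls r1 r2[of 1] r2[of 2] unfolding R_def by auto
  qed
  have Pl: "(case \<pi> x l of None \<Rightarrow> 0 | Some q \<Rightarrow> if step n x q = z then \<mu> (fst q) (snd q) else 0) / R x
      = (if s l x = z then p l x else 0)" for x z l
  proof (cases "\<pi> x l")
    case None
    have "p l x = 0" using None by (simp add: p_def server_rate_def)
    thus ?thesis using None by simp
  qed (simp_all add: s_def p_def server_rate_def)
  have Pform: "P x z = (if s 1 x = z then p 1 x else 0) + (if s 2 x = z then p 2 x else 0)" for x z
  proof -
    have "P x z = (case \<pi> x 1 of None \<Rightarrow> 0 | Some q \<Rightarrow> if step n x q = z then \<mu> (fst q) (snd q) else 0) / R x
       + (case \<pi> x 2 of None \<Rightarrow> 0 | Some q \<Rightarrow> if step n x q = z then \<mu> (fst q) (snd q) else 0) / R x"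
      unfolding P_def embedded_kernel_def R_def by (simp add: add_divide_distrib)
    thus ?thesis by (simp only: Pl)
  qed
  have "\<not> positive_recurrent P x0"
  proof (rule no_pos_rec[of P s p SS V L x0, OF Pform])
    show "x0 \<in> SS" by (rule x0)
    show "p 1 x \<ge> 0 \<and> p 2 x \<ge> 0" if "x \<in> SS" for x
    proof -
      have "server_rate \<mu> \<pi> x l \<ge> 0" if "l \<in> {1,2}" for l
        using NIs[OF \<open>x \<in> SS\<close> that] mupos by (cases "\<pi> x l") (auto simp: server_rate_def less_imp_le)
      thus ?thesis using Rpos[OF that] unfolding p_def by simp
    qed
    show "p 1 x + p 2 x = 1" if "x \<in> SS" for x
      using Rpos[OF that] unfolding p_def R_def by (simp add: add_divide_distrib[symmetric])
    show "s 1 x \<in> SS \<and> s 2 x \<in> SS" if "x \<in> SS" for x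
    proof -
      have "s l x \<in> SS" if "l \<in> {1,2}" for l
        using NIs[OF \<open>x \<in> SS\<close> that] sstep[OF \<open>x \<in> SS\<close>] \<open>x \<in> SS\<close>
        by (cases "\<pi> x l") (auto simp: s_def)
      thus ?thesis by simp
    qed
    show "\<bar>V (s 1 x) - V x\<bar> \<le> L \<and> \<bar>V (s 2 x) - V x\<bar> \<le> L" if "x \<in> SS" for x
    proof -
      have "\<bar>V (s l x) - V x\<bar> \<le> L" if l: "l \<in> {1,2}" for l
      proof (cases "\<pi> x l")
        case None
        have "0 \<le> (\<Sum>q\<in>ops S n. 1 / \<mu> (fst q) (snd q))"
          by (rule sum_nonneg) (use mupos in \<open>auto intro: less_imp_le\<close>)
        thus ?thesis using None unfolding s_def L_def by simp
      next
        case (Some q)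
        have q: "q \<in> ops S n" "performable x q" using NIs[OF \<open>x \<in> SS\<close> l Some] by auto
        have "\<bar>V (s l x) - V x\<bar> \<le> 2 * \<bar>D (s l x) - D x\<bar>" unfolding V_def by (rule ff_lip)
        also have "\<bar>D (s l x) - D x\<bar> = 1 / \<mu> (fst q) (snd q)"
          using Some Dstep[OF q] mupos[OF q(1)] by (simp add: s_def d_def)
        also have "1 / \<mu> (fst q) (snd q) \<le> (\<Sum>q\<in>ops S n. 1 / \<mu> (fst q) (snd q))"
          by (rule member_le_sum[OF q(1)]) (use mupos in \<open>auto intro: less_imp_le\<close>, rule finite_ops)
        finally show ?thesis unfolding L_def by simp
      qed
      thus ?thesis by simp
    qed
    show "p 1 x * V (s 1 x) + p 2 x * V (s 2 x) < V x" if xS: "x \<in> SS" for x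
    proof -
      define t where "t = D x"
      define e where "e l = (case \<pi> x l of None \<Rightarrow> 0 | Some q \<Rightarrow> (if \<sigma> (fst q) (snd q) = ls then -1 else 1::real))" for l
      have Rp: "R x > 0" using Rpos[OF xS] .
      have trm: "p l x * V (s l x) \<le> p l x * ff t + ffd t * e l / R x
          \<and> (l = ls \<longrightarrow> p l x * V (s l x) < p l x * ff t + ffd t * e l / R x)" if l: "l \<in> {1,2}" for l
      proof (cases "\<pi> x l")
        case None
        have "l \<noteq> ls" using Sls[OF xS] None by auto
        thus ?thesis using None by (simp add: p_def e_def server_rate_def)
      next
        case (Some q)
        have q: "q \<in> ops S n" "performable x q" "\<sigma> (fst q) (snd q) = l" using NIs[OF xS l Some] by auto
        have mq: "\<mu> (fst q) (snd q) > 0" using mupos[OF q(1)] .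
        have dne: "d q \<noteq> 0" using mq by (simp add: d_def)
        have Vs: "V (s l x) = ff (t + d q)" using Some Dstep[OF q(1,2)] by (simp add: V_def s_def t_def)
        have tan: "ff (t + d q) < ff t + ffd t * d q" using ff_tangent[of "t + d q" t] dne by simp
        have pl: "p l x = \<mu> (fst q) (snd q) / R x" using Some by (simp add: p_def server_rate_def)
        have ppos: "p l x > 0" using pl mq Rp by simp
        have "p l x * V (s l x) < p l x * (ff t + ffd t * d q)" unfolding Vs using tan ppos by simp
        also have "p l x * (ff t + ffd t * d q) = p l x * ff t + ffd t * e l / R x"
          using Some mq Rp unfolding pl e_def d_def by (simp add: field_simps)
        finally have "p l x * V (s l x) < p l x * ff t + ffd t * e l / R x" .
        thus ?thesis using less_imp_le by blast
      qed
      have els: "e ls = -1" using Sls[OF xS] NIs[OF xS ls] unfolding e_def by auto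
      have ele: "e l \<le> 1" for l unfolding e_def by (auto split: option.splits)
      have psum: "p 1 x + p 2 x = 1" using Rp unfolding p_def R_def by (simp add: add_divide_distrib[symmetric])
      have sum_e: "e 1 + e 2 \<le> 0" using ls els ele[of 1] ele[of 2] by auto
      have fd: "ffd t > 0" by (rule ffd_pos)
      have "ffd t * e 1 / R x + ffd t * e 2 / R x = ffd t * (e 1 + e 2) / R x" by (simp add: add_divide_distrib distrib_left)
      also have "\<dots> \<le> 0" using sum_e fd Rp by (simp add: divide_nonpos_pos mult_nonneg_nonpos)
      finally have esum: "ffd t * e 1 / R x + ffd t * e 2 / R x \<le> 0" .
      have "p 1 x * V (s 1 x) + p 2 x * V (s 2 x) < (p 1 x * ff t + ffd t * e 1 / R x) + (p 2 x * ff t + ffd t * e 2 / R x)"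
        using trm[of 1] trm[of 2] ls by auto
      also have "\<dots> = (p 1 x + p 2 x) * ff t + (ffd t * e 1 / R x + ffd t * e 2 / R x)" by (simp add: algebra_simps)
      also have "\<dots> \<le> ff t" using psum esum by simp
      finally show ?thesis by (simp add: V_def t_def)
    qed
  qed
  thus False using pr by simp
qed


end
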